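(* Consider the following algorithm (PMI) on training bags $B_1,\dots,B_N$, $B_i=[B_{i1},\dots,B_{iN_i}]$, $B_{ij}\in\mathbb{R}^d$, $n=\sum_iN_i$, with kernel $\ker$ (feature map $\Phi$) and parameter $\nu\in(0,1)$, and with access to an oracle returning the label ($\pm1$) of any queried instance. Repeat: (1) compute $\lambda$ minimizing $\sum_i\|\sum_j\lambda_{ij}\Phi(B_{ij})-\frac1N\sum_k\sum_j\lambda_{kj}\Phi(B_{kj})\|^2$ s.t. $\sum_j\lambda_{ij}=1$, $\lambda_{ij}\ge0$, and set $b_i=\sum_j\lambda_{ij}\Phi(B_{ij})$; (2) solve $\min_\alpha\frac12\sum_{i,j}\alpha_i\alpha_j\ker(b_i,b_j)$ s.t. $0\le\alpha_i\le\frac1{\nu N}$, $\sum_i\alpha_i=1$, giving $\rho$, $l(x)=\sum_j\alpha_j\sum_k\lambda_{jk}\ker(x,B_{jk})-\rho$ and $f(x)=\operatorname{sign}(l(x))$; (3)–(4) if some bag $B_i$ has $\alpha_i<\frac1{\nu N}$ and $\max_j f(B_{ij})=-1$, choose $s_i=\arg\max_j l(B_{ij})$ for every $i$, solve $\min_{\alpha'}\frac12\sum_{p,q}\alpha'_p\alpha'_q\ker(x_p,x_q)$ s.t. $0\le\alpha'_p\le\frac1{2\nu N}$, $\sum_p\alpha'_p=1$ over the $2N$ points $\{b_i\}\cup\{B_{is_i}\}$, and replace $l,f$ by the resulting $l'(x)=\sum_p\alpha'_p\ker(x,x_p)-\rho'$, $f=\operatorname{sign}(l')$; (6) if some bag has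 $f(B_{ij})=1$ for all its instances, stop; (7) query the label of $\arg\max_{i,j}\{l(B_{ij}) : l(B_{ij})\ge0\}$; (8) if it is positive, stop; otherwise remove from all bags every instance $B_{ij}$ with $f(B_{ij})=1$ and repeat from (1) (with $N_i$, $n$ updated). Then: if $\nu<\frac1N$, the maximum number of queried instances is $\min_{i=1,\dots,N}N_i-1$; otherwise the maximum number of queried instances is $\lceil\frac{n}{(1-\nu)N}\rceil-1$.
   Context: $N_i$, $n$ and $N$ in the conclusion refer to the initial training set. $\operatorname{sign}(y)=+1$ if $y\ge0$ and $-1$ otherwise; $\ker(x,y)=\Phi(x)\cdot\Phi(y)$, and kernel values involving virtual instances $b_i$ are expanded linearly, $\ker(b_i,b_j)=\sum_{k,r}\lambda_{ik}\lambda_{jr}\ker(B_{ik},B_{jr})$. $\rho$ is $\sum_i\alpha_i\ker(b_i,b_j)$ for any $j$ with $0<\alpha_j<\frac1{\nu N}$ (analogously $\rho'$). $\lceil x\rceil$ is the least integer not smaller than $x$. *)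

theory Defs
  imports "HOL-Analysis.Analysis"
begin

definition kern :: "('x \<Rightarrow> 'h::real_inner) \<Rightarrow> 'x \<Rightarrow> 'x \<Rightarrow> real" where
  "kern Phi x y = Phi x \<bullet> Phi y"

definition sgn1 :: "real \<Rightarrow> int" where
  "sgn1 y = (if y \<ge> 0 then 1 else -1)"

text \<open>Step (1): weights lambda on each bag (bags are lists; i < N, j < N_i).\<close>
definition lam_feasible :: "'x list list \<Rightarrow> (nat \<Rightarrow> nat \<Rightarrow> real) \<Rightarrow> bool" where
  "lam_feasible Bs lam \<longleftrightarrow>
     (\<forall>i<length Bs. (\<Sum>j<length (Bs!i). lam i j) = 1 \<and> (\<forall>j<length (Bs!i). lam i j \<ge> 0))"

definition virt :: "('x \<Rightarrow> 'h::real_inner) \<Rightarrow> 'x list list \<Rightarrow> (nat \<Rightarrow> nat \<Rightarrow> real) \<Rightarrow> nat \<Rightarrow> 'h" where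
  "virt Phi Bs lam i = (\<Sum>j<length (Bs!i). lam i j *\<^sub>R Phi (Bs!i!j))"

definition lam_obj :: "('x \<Rightarrow> 'h::real_inner) \<Rightarrow> 'x list list \<Rightarrow> (nat \<Rightarrow> nat \<Rightarrow> real) \<Rightarrow> real" where
  "lam_obj Phi Bs lam =
     (\<Sum>i<length Bs. (norm (virt Phi Bs lam i
        - (1 / real (length Bs)) *\<^sub>R (\<Sum>k<length Bs. virt Phi Bs lam k)))\<^sup>2)"

definition lam_min :: "('x \<Rightarrow> 'h::real_inner) \<Rightarrow> 'x list list \<Rightarrow> (nat \<Rightarrow> nat \<Rightarrow> real) \<Rightarrow> bool" where
  "lam_min Phi Bs lam \<longleftrightarrow> lam_feasible Bs lam \<and>
     (\<forall>mu. lam_feasible Bs mu \<longrightarrow> lam_obj Phi Bs lam \<le> lam_obj Phi Bs mu)"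

text \<open>The quadratic programs of steps (2) and (4): M points, Gram matrix K, box bound C.\<close>
definition qp_feas :: "nat \<Rightarrow> real \<Rightarrow> (nat \<Rightarrow> real) \<Rightarrow> bool" where
  "qp_feas M C a \<longleftrightarrow> (\<forall>i<M. 0 \<le> a i \<and> a i \<le> C) \<and> (\<Sum>i<M. a i) = 1"

definition qp_obj :: "nat \<Rightarrow> (nat \<Rightarrow> nat \<Rightarrow> real) \<Rightarrow> (nat \<Rightarrow> real) \<Rightarrow> real" where
  "qp_obj M K a = 1/2 * (\<Sum>i<M. \<Sum>j<M. a i * a j * K i j)"

definition qp_min :: "nat \<Rightarrow> real \<Rightarrow> (nat \<Rightarrow> nat \<Rightarrow> real) \<Rightarrow> (nat \<Rightarrow> real) \<Rightarrow> bool" where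
  "qp_min M C K a \<longleftrightarrow> qp_feas M C a \<and> (\<forall>c. qp_feas M C c \<longrightarrow> qp_obj M K a \<le> qp_obj M K c)"

definition offset_ok :: "nat \<Rightarrow> real \<Rightarrow> (nat \<Rightarrow> nat \<Rightarrow> real) \<Rightarrow> (nat \<Rightarrow> real) \<Rightarrow> real \<Rightarrow> bool" where
  "offset_ok M C K a rho \<longleftrightarrow> (\<exists>j<M. 0 < a j \<and> a j < C \<and> rho = (\<Sum>i<M. a i * K i j))"

text \<open>Steps (1)-(2): lambda, alpha, rho.  ker(b_i,b_j) (linear expansion) = b_i . b_j.\<close>
definition base_classifier :: "('x \<Rightarrow> 'h::real_inner) \<Rightarrow> real \<Rightarrow> 'x list list
    \<Rightarrow> (nat \<Rightarrow> nat \<Rightarrow> real) \<Rightarrow> (nat \<Rightarrow> real) \<Rightarrow> real \<Rightarrow> bool" where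
  "base_classifier Phi nu Bs lam a rho \<longleftrightarrow>
     lam_min Phi Bs lam \<and>
     qp_min (length Bs) (1 / (nu * real (length Bs)))
        (\<lambda>i j. virt Phi Bs lam i \<bullet> virt Phi Bs lam j) a \<and>
     offset_ok (length Bs) (1 / (nu * real (length Bs)))
        (\<lambda>i j. virt Phi Bs lam i \<bullet> virt Phi Bs lam j) a rho"

definition lfun :: "('x \<Rightarrow> 'h::real_inner) \<Rightarrow> 'x list list \<Rightarrow> (nat \<Rightarrow> nat \<Rightarrow> real)
    \<Rightarrow> (nat \<Rightarrow> real) \<Rightarrow> real \<Rightarrow> 'x \<Rightarrow> real" where
  "lfun Phi Bs lam a rho x =
     (\<Sum>j<length Bs. a j * (\<Sum>k<length (Bs!j). lam j k * kern Phi x (Bs!j!k))) - rho"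

definition refined_points :: "('x \<Rightarrow> 'h::real_inner) \<Rightarrow> 'x list list \<Rightarrow> (nat \<Rightarrow> nat \<Rightarrow> real)
    \<Rightarrow> (nat \<Rightarrow> nat) \<Rightarrow> nat \<Rightarrow> 'h" where
  "refined_points Phi Bs lam s p =
     (if p < length Bs then virt Phi Bs lam p else Phi (Bs!(p - length Bs)!(s (p - length Bs))))"

text \<open>Steps (3)-(4): s_i = argmax_j l(B_ij), alpha', rho', and the new function l'.\<close>
definition refined_classifier :: "('x \<Rightarrow> 'h::real_inner) \<Rightarrow> real \<Rightarrow> 'x list list
    \<Rightarrow> (nat \<Rightarrow> nat \<Rightarrow> real) \<Rightarrow> ('x \<Rightarrow> real) \<Rightarrow> ('x \<Rightarrow> real) \<Rightarrow> bool" where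
  "refined_classifier Phi nu Bs lam l l' \<longleftrightarrow>
     (\<exists>s a' rho'.
        (\<forall>i<length Bs. s i < length (Bs!i) \<and>
            (\<forall>j<length (Bs!i). l (Bs!i!j) \<le> l (Bs!i!(s i)))) \<and>
        qp_min (2 * length Bs) (1 / (2 * nu * real (length Bs)))
          (\<lambda>p q. refined_points Phi Bs lam s p \<bullet> refined_points Phi Bs lam s q) a' \<and>
        offset_ok (2 * length Bs) (1 / (2 * nu * real (length Bs)))
          (\<lambda>p q. refined_points Phi Bs lam s p \<bullet> refined_points Phi Bs lam s q) a' rho' \<and>
        l' = (\<lambda>x. (\<Sum>p<2 * length Bs. a' p * (Phi x \<bullet> refined_points Phi Bs lam s p)) - rho'))"

text \<open>The decision function l used in steps (6)-(8) of one round.\<close>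
definition round_classifier :: "('x \<Rightarrow> 'h::real_inner) \<Rightarrow> real \<Rightarrow> 'x list list \<Rightarrow> ('x \<Rightarrow> real) \<Rightarrow> bool" where
  "round_classifier Phi nu Bs l \<longleftrightarrow>
     (\<exists>lam a rho. base_classifier Phi nu Bs lam a rho \<and>
        (if (\<exists>i<length Bs. a i < 1 / (nu * real (length Bs)) \<and> Bs!i \<noteq> [] \<and>
                (\<forall>x\<in>set (Bs!i). sgn1 (lfun Phi Bs lam a rho x) = -1))
         then refined_classifier Phi nu Bs lam (lfun Phi Bs lam a rho) l
         else l = lfun Phi Bs lam a rho))"

text \<open>Algorithm states: running with current bags and number of queries so far, or stopped.\<close>
datatype 'x pmi_state = Run "'x list list" nat | Stop nat

fun queries :: "'x pmi_state \<Rightarrow> nat" where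
  "queries (Run _ q) = q"
| "queries (Stop q) = q"

text \<open>One iteration of PMI (label x = True iff the label of x is +1).\<close>
definition pmi_step :: "('x \<Rightarrow> 'h::real_inner) \<Rightarrow> real \<Rightarrow> ('x \<Rightarrow> bool)
    \<Rightarrow> 'x pmi_state \<Rightarrow> 'x pmi_state \<Rightarrow> bool" where
  "pmi_step Phi nu label st st' \<longleftrightarrow>
     (\<exists>Bs q l. st = Run Bs q \<and> round_classifier Phi nu Bs l \<and>
        (if (\<exists>i<length Bs. \<forall>x\<in>set (Bs!i). sgn1 (l x) = 1)
         then st' = Stop q
         else (\<exists>i j. i < length Bs \<and> j < length (Bs!i) \<and> l (Bs!i!j) \<ge> 0 \<and>
                 (\<forall>i' j'. i' < length Bs \<longrightarrow> j' < length (Bs!i') \<longrightarrow> l (Bs!i'!j') \<ge> 0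
                      \<longrightarrow> l (Bs!i'!j') \<le> l (Bs!i!j)) \<and>
                 (if label (Bs!i!j) then st' = Stop (Suc q)
                  else st' = Run (map (filter (\<lambda>x. sgn1 (l x) \<noteq> 1)) Bs) (Suc q)))))"

end

theory Submission
  imports Defs
begin

lemma qp_obj_norm:
  "qp_obj M (\<lambda>i j. x i \<bullet> x j) a = 1/2 * (norm (\<Sum>i<M. a i *\<^sub>R x i))\<^sup>2"
  unfolding qp_obj_def power2_norm_eq_inner
  by (simp add: inner_sum_left inner_sum_right sum_distrib_left mult.assoc) (intro sum.cong refl, simp add: inner_commute)

lemma qp_exchange:
  fixes x :: "nat \<Rightarrow> 'h::real_inner"
  assumes qm: "qp_min M C (\<lambda>i j. x i \<bullet> x j) a"
    and j: "j < M" "0 < a j" and p: "p < M" "a p < C"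
  shows "(\<Sum>i<M. a i *\<^sub>R x i) \<bullet> x j \<le> (\<Sum>i<M. a i *\<^sub>R x i) \<bullet> x p"
proof (rule ccontr)
  define w where "w = (\<Sum>i<M. a i *\<^sub>R x i)"
  assume "\<not> ?thesis"
  hence lt: "w \<bullet> x p < w \<bullet> x j" by (simp add: w_def)
  hence pj: "p \<noteq> j" by auto
  define d where "d = w \<bullet> x j - w \<bullet> x p"
  define D where "D = (x p - x j) \<bullet> (x p - x j)"
  have d0: "d > 0" using lt d_def by simp
  have D0: "D \<ge> 0" unfolding D_def by simp
  define t where "t = min (min (C - a p) (a j)) (if D = 0 then 1 else d / D)"
  have t0: "t > 0" using p j d0 D0 by (auto simp: t_def)
  have t1: "t \<le> C - a p" "t \<le> a j" by (auto simp: t_def)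
  have tD: "t * D \<le> d"
  proof (cases "D = 0")
    case True thus ?thesis using d0 by simp
  next
    case False
    hence "t \<le> d / D" by (simp add: t_def)
    hence "t * D \<le> d / D * D" using D0 by (rule mult_right_mono)
    thus ?thesis using False by simp
  qed
  define c where "c = (\<lambda>i. a i + (if i = p then t else 0) - (if i = j then t else 0))"
  have feas: "qp_feas M C a" using qm by (simp add: qp_min_def)
  have cfeas: "qp_feas M C c"
    unfolding qp_feas_def
  proof (intro conjI allI impI)
    fix i assume "i < M"
    thus "0 \<le> c i" "c i \<le> C" using feas t0 t1 pj j p
      by (auto simp: c_def qp_feas_def)
  next
    have "(\<Sum>i<M. c i) = (\<Sum>i<M. a i) + (\<Sum>i<M. (if i = p then t else 0)) - (\<Sum>i<M. (if i = j then t else 0))"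
      unfolding c_def by (simp add: sum.distrib sum_subtractf)
    also have "\<dots> = 1" using feas p j by (simp add: qp_feas_def)
    finally show "(\<Sum>i<M. c i) = 1" .
  qed
  have wc: "(\<Sum>i<M. c i *\<^sub>R x i) = w + t *\<^sub>R (x p - x j)"
  proof -
    have "(\<Sum>i<M. c i *\<^sub>R x i) = (\<Sum>i<M. a i *\<^sub>R x i) + (\<Sum>i<M. (if i = p then t else 0) *\<^sub>R x i) - (\<Sum>i<M. (if i = j then t else 0) *\<^sub>R x i)"
      unfolding c_def by (simp add: scaleR_add_left scaleR_diff_left sum.distrib sum_subtractf)
    also have "\<dots> = w + t *\<^sub>R x p - t *\<^sub>R x j"
    proof -
      have "(\<Sum>i<M. (if i = q then t else 0) *\<^sub>R x i) = t *\<^sub>R x q" if "q < M" for q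
      proof -
        have "(\<Sum>i<M. (if i = q then t else 0) *\<^sub>R x i) = (\<Sum>i<M. if i = q then t *\<^sub>R x i else 0)"
          by (rule sum.cong) auto
        also have "\<dots> = t *\<^sub>R x q" using that by (simp add: sum.delta')
        finally show ?thesis .
      qed
      thus ?thesis using p j by (simp add: w_def)
    qed
    finally show ?thesis by (simp add: scaleR_diff_right)
  qed
  have "qp_obj M (\<lambda>i j. x i \<bullet> x j) c = 1/2 * ((w + t *\<^sub>R (x p - x j)) \<bullet> (w + t *\<^sub>R (x p - x j)))"
    by (simp add: qp_obj_norm wc power2_norm_eq_inner)
  also have "\<dots> = 1/2 * (w \<bullet> w) - t * d + t\<^sup>2 / 2 * D"
  proof -
    have e1: "(w + v) \<bullet> (w + v) = w \<bullet> w + 2 * (w \<bullet> v) + v \<bullet> v" for v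
      by (simp add: inner_add_left inner_add_right inner_commute[of v w])
    have e2: "w \<bullet> (t *\<^sub>R (x p - x j)) = - (t * d)"
      by (simp add: d_def inner_diff_right algebra_simps)
    have e3: "(t *\<^sub>R (x p - x j)) \<bullet> (t *\<^sub>R (x p - x j)) = t\<^sup>2 * D"
      by (simp add: D_def power2_eq_square)
    show ?thesis unfolding e1 e2 e3 by simp
  qed
  also have "\<dots> < 1/2 * (w \<bullet> w)"
  proof -
    have "t\<^sup>2 / 2 * D = t / 2 * (t * D)" by (simp add: power2_eq_square)
    also have "\<dots> \<le> t / 2 * d" using tD t0 by (simp add: mult_left_mono)
    finally have "t\<^sup>2 / 2 * D \<le> t / 2 * d" .
    moreover have "0 < t * d" using t0 d0 by simp
    ultimately show ?thesis by simp
  qed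
  also have "\<dots> = qp_obj M (\<lambda>i j. x i \<bullet> x j) a"
    by (simp add: qp_obj_norm w_def power2_norm_eq_inner)
  finally show False using qm cfeas by (auto simp: qp_min_def)
qed

lemma outlier_card:
  assumes "qp_feas M C a" "C > 0"
  shows "real (card {p. p < M \<and> \<not> a p < C}) * C \<le> 1"
proof -
  let ?S = "{p. p < M \<and> \<not> a p < C}"
  have "real (card ?S) * C = (\<Sum>p\<in>?S. C)" by simp
  also have "\<dots> \<le> (\<Sum>p\<in>?S. a p)" by (rule sum_mono) auto
  also have "\<dots> \<le> (\<Sum>p<M. a p)"
    by (rule sum_mono2) (use assms in \<open>auto simp: qp_feas_def\<close>)
  also have "\<dots> = 1" using assms by (simp add: qp_feas_def)
  finally show ?thesis .
qed

lemma qp_generic: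
  fixes x :: "nat \<Rightarrow> 'h::real_inner"
  assumes qm: "qp_min M C (\<lambda>i j. x i \<bullet> x j) a"
    and off: "offset_ok M C (\<lambda>i j. x i \<bullet> x j) a rho"
    and p: "p < M" "a p < C"
  shows "(\<Sum>i<M. a i *\<^sub>R x i) \<bullet> x p \<ge> rho"
proof -
  obtain j where j: "j < M" "0 < a j" "rho = (\<Sum>i<M. a i * (x i \<bullet> x j))"
    using off by (auto simp: offset_ok_def)
  have "rho = (\<Sum>i<M. a i *\<^sub>R x i) \<bullet> x j" using j by (simp add: inner_sum_left)
  thus ?thesis using qp_exchange[OF qm j(1,2) p] by simp
qed


lemma lfun_repr:
  "lfun Phi Bs lam a rho x = Phi x \<bullet> (\<Sum>j<length Bs. a j *\<^sub>R virt Phi Bs lam j) - rho"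
  by (simp add: lfun_def virt_def kern_def inner_sum_right sum_distrib_left)

lemma convex_exists:
  fixes lam f :: "nat \<Rightarrow> real"
  assumes "\<forall>k<n. 0 \<le> lam k" "(\<Sum>k<n. lam k) = 1" "0 \<le> (\<Sum>k<n. lam k * f k)"
  shows "\<exists>k<n. 0 \<le> f k"
proof (rule ccontr)
  assume "\<not> ?thesis"
  hence neg: "\<forall>k<n. f k < 0" by auto
  have le: "\<forall>k\<in>{..<n}. lam k * f k \<le> 0" using neg assms(1) by (auto intro: mult_nonneg_nonpos less_imp_le)
  hence "(\<Sum>k<n. lam k * f k) \<le> 0" by (intro sum_nonpos) auto
  hence "(\<Sum>k<n. lam k * f k) = 0" using assms(3) by simp
  hence "(\<Sum>k<n. - (lam k * f k)) = 0" by (simp add: sum_negf)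
  hence "\<forall>k\<in>{..<n}. - (lam k * f k) = 0" using le sum_nonneg_eq_0_iff[of "{..<n}" "\<lambda>k. - (lam k * f k)"] by simp
  hence "\<forall>k\<in>{..<n}. lam k * f k = 0" by simp
  hence "\<forall>k<n. lam k = 0" using neg by (metis lessThan_iff less_irrefl mult_eq_0_iff)
  hence "(\<Sum>k<n. lam k) = 0" by simp
  thus False using assms(2) by simp
qed

lemma virt_pos:
  assumes "lam_feasible Bs lam" "i < length Bs" "r \<le> w \<bullet> virt Phi Bs lam i"
  shows "\<exists>x\<in>set (Bs!i). 0 \<le> Phi x \<bullet> w - r"
proof -
  have f: "\<forall>k<length (Bs!i). 0 \<le> lam i k" "(\<Sum>k<length (Bs!i). lam i k) = 1"
    using assms(1,2) by (auto simp: lam_feasible_def)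
  have "w \<bullet> virt Phi Bs lam i - r = (\<Sum>k<length (Bs!i). lam i k * (Phi (Bs!i!k) \<bullet> w - r))"
    using f(2) by (simp add: virt_def inner_sum_right right_diff_distrib sum_subtractf
        inner_commute flip: sum_distrib_right)
  hence "0 \<le> (\<Sum>k<length (Bs!i). lam i k * (Phi (Bs!i!k) \<bullet> w - r))" using assms(3) by simp
  from convex_exists[OF f this] obtain k where "k < length (Bs!i)" "0 \<le> Phi (Bs!i!k) \<bullet> w - r"
    by auto
  thus ?thesis by (auto intro!: bexI[of _ "Bs!i!k"])
qed


lemma card_outl_bound:
  assumes "qp_feas M C a" "C > 0" "C = 1 / K" "K > 0"
  shows "real (card {p. p < M \<and> \<not> a p < C}) \<le> K"
proof -
  have "real (card {p. p < M \<and> \<not> a p < C}) * (1 / K) \<le> 1"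
    using outlier_card[OF assms(1,2)] assms(3) by simp
  thus ?thesis using assms(4) by (simp add: field_simps)
qed

lemma base_key:
  fixes Phi :: "'x \<Rightarrow> 'h::real_inner"
  assumes bc: "base_classifier Phi nu Bs lam a rho" and N: "length Bs > 0" and nu: "0 < nu"
  shows "(1 - nu) * real (length Bs)
           \<le> real (card {i. i < length Bs \<and> (\<exists>x\<in>set (Bs!i). 0 \<le> lfun Phi Bs lam a rho x)})"
proof -
  define N where "N = length Bs"
  define C where "C = 1 / (nu * real N)"
  define w where "w = (\<Sum>j<N. a j *\<^sub>R virt Phi Bs lam j)"
  have lm: "lam_feasible Bs lam" and qm: "qp_min N C (\<lambda>i j. virt Phi Bs lam i \<bullet> virt Phi Bs lam j) a"
    and off: "offset_ok N C (\<lambda>i j. virt Phi Bs lam i \<bullet> virt Phi Bs lam j) a rho"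
    using bc by (auto simp: base_classifier_def lam_min_def N_def C_def)
  define P where "P = {i. i < length Bs \<and> (\<exists>x\<in>set (Bs!i). 0 \<le> lfun Phi Bs lam a rho x)}"
  define G where "G = {i. i < N \<and> a i < C}"
  define Ou where "Ou = {i. i < N \<and> \<not> a i < C}"
  have Npos: "real N > 0" using N by (simp add: N_def)
  have C0: "C > 0" using nu Npos by (simp add: C_def)
  have cO: "real (card Ou) \<le> nu * real N"
    unfolding Ou_def
    by (rule card_outl_bound[OF _ C0 C_def]) (use qm nu Npos in \<open>auto simp: qp_min_def\<close>)
  have GP: "G \<subseteq> P"
  proof
    fix i assume "i \<in> G"
    hence i: "i < N" "a i < C" by (auto simp: G_def)
    have "rho \<le> w \<bullet> virt Phi Bs lam i"
      using qp_generic[OF qm off i] by (simp add: w_def)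
    from virt_pos[OF lm _ this] i obtain x where "x \<in> set (Bs!i)" "0 \<le> Phi x \<bullet> w - rho"
      by (auto simp: N_def)
    thus "i \<in> P" using i by (auto simp: P_def lfun_repr w_def N_def)
  qed
  have fin: "finite P" unfolding P_def by simp
  have "card G + card Ou = N"
  proof -
    have "G \<union> Ou = {..<N}" "G \<inter> Ou = {}" by (auto simp: G_def Ou_def)
    moreover have "finite G" "finite Ou" by (auto simp: G_def Ou_def)
    ultimately show ?thesis by (metis card_Un_disjoint card_lessThan)
  qed
  moreover have "card G \<le> card P" using card_mono[OF fin GP] .
  ultimately have "real N \<le> real (card P) + real (card Ou)" by linarith
  thus ?thesis using cO by (simp add: P_def N_def algebra_simps)
qed

lemma refined_key:
  fixes Phi :: "'x \<Rightarrow> 'h::real_inner"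
  assumes rc: "refined_classifier Phi nu Bs lam l0 l" and lm: "lam_feasible Bs lam"
    and N: "length Bs > 0" and nu: "0 < nu"
  shows "(1 - nu) * real (length Bs)
           \<le> real (card {i. i < length Bs \<and> (\<exists>x\<in>set (Bs!i). 0 \<le> l x)})"
proof -
  define N where "N = length Bs"
  define C where "C = 1 / (2 * nu * real N)"
  obtain s a rho where s: "\<forall>i<N. s i < length (Bs!i)"
    and qm: "qp_min (2*N) C (\<lambda>p q. refined_points Phi Bs lam s p \<bullet> refined_points Phi Bs lam s q) a"
    and off: "offset_ok (2*N) C (\<lambda>p q. refined_points Phi Bs lam s p \<bullet> refined_points Phi Bs lam s q) a rho"
    and leq: "l = (\<lambda>x. (\<Sum>p<2 * N. a p * (Phi x \<bullet> refined_points Phi Bs lam s p)) - rho)"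
    using rc unfolding refined_classifier_def N_def C_def by blast
  define w where "w = (\<Sum>p<2*N. a p *\<^sub>R refined_points Phi Bs lam s p)"
  have lw: "l x = Phi x \<bullet> w - rho" for x
    by (simp add: leq w_def inner_sum_right)
  define P where "P = {i. i < N \<and> (\<exists>x\<in>set (Bs!i). 0 \<le> l x)}"
  define B where "B = {i. i < N \<and> i \<notin> P}"
  define Ou where "Ou = {p. p < 2*N \<and> \<not> a p < C}"
  have Npos: "real N > 0" using N by (simp add: N_def)
  have C0: "C > 0" using nu Npos by (simp add: C_def)
  have cO: "real (card Ou) \<le> 2 * nu * real N"
    unfolding Ou_def
    by (rule card_outl_bound[OF _ C0 C_def]) (use qm nu Npos in \<open>auto simp: qp_min_def\<close>)
  have B1: "B \<subseteq> Ou"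
  proof
    fix i assume iB: "i \<in> B"
    hence i: "i < N" "i \<notin> P" by (auto simp: B_def)
    show "i \<in> Ou"
    proof (rule ccontr)
      assume "i \<notin> Ou"
      hence ai: "a i < C" using i by (auto simp: Ou_def)
      have "rho \<le> w \<bullet> refined_points Phi Bs lam s i"
        using qp_generic[OF qm off _ ai] i by (simp add: w_def)
      hence "rho \<le> w \<bullet> virt Phi Bs lam i" using i by (simp add: refined_points_def N_def)
      from virt_pos[OF lm _ this] i obtain x where "x \<in> set (Bs!i)" "0 \<le> Phi x \<bullet> w - rho"
        by (auto simp: N_def)
      hence "i \<in> P" using i by (auto simp: P_def lw)
      thus False using i by simp
    qed
  qed
  have B2: "(\<lambda>i. N + i) ` B \<subseteq> Ou"
  proof
    fix p assume "p \<in> (\<lambda>i. N + i) ` B"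
    then obtain i where iB: "i \<in> B" and p: "p = N + i" by auto
    hence i: "i < N" "i \<notin> P" by (auto simp: B_def)
    show "p \<in> Ou"
    proof (rule ccontr)
      assume "p \<notin> Ou"
      hence ap: "a p < C" using i p by (auto simp: Ou_def)
      have "rho \<le> w \<bullet> refined_points Phi Bs lam s p"
        using qp_generic[OF qm off _ ap] i p by (simp add: w_def)
      hence "rho \<le> w \<bullet> Phi (Bs!i!(s i))" using i p by (simp add: refined_points_def N_def)
      hence "0 \<le> l (Bs!i!(s i))" by (simp add: lw inner_commute)
      moreover have "Bs!i!(s i) \<in> set (Bs!i)" using s i by simp
      ultimately have "i \<in> P" using i by (auto simp: P_def)
      thus False using i by simp
    qed
  qed
  have finO: "finite Ou" by (simp add: Ou_def)
  have "card (B \<union> (\<lambda>i. N + i) ` B) \<le> card Ou"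
    using B1 B2 by (intro card_mono[OF finO]) auto
  moreover have "card (B \<union> (\<lambda>i. N + i) ` B) = card B + card B"
  proof -
    have fB: "finite B" by (simp add: B_def)
    have "B \<inter> (\<lambda>i. N + i) ` B = {}" by (auto simp: B_def)
    hence "card (B \<union> (\<lambda>i. N + i) ` B) = card B + card ((\<lambda>i. N + i) ` B)"
      using fB by (simp add: card_Un_disjoint)
    also have "card ((\<lambda>i. N + i) ` B) = card B" by (simp add: card_image)
    finally show ?thesis .
  qed
  moreover have "card P + card B = N"
  proof -
    have "P \<union> B = {..<N}" "P \<inter> B = {}" by (auto simp: P_def B_def)
    moreover have "finite P" "finite B" by (auto simp: P_def B_def)
    ultimately show ?thesis by (metis card_Un_disjoint card_lessThan)
  qed
  ultimately have "2 * real N \<le> 2 * real (card P) + real (card Ou)" by linarith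
  thus ?thesis using cO by (simp add: P_def N_def algebra_simps)
qed

lemma round_key:
  fixes Phi :: "'x \<Rightarrow> 'h::real_inner"
  assumes rc: "round_classifier Phi nu Bs l" and N: "length Bs > 0" and nu: "0 < nu"
  shows "(1 - nu) * real (length Bs)
           \<le> real (card {i. i < length Bs \<and> (\<exists>x\<in>set (Bs!i). 0 \<le> l x)})"
proof -
  obtain lam a rho where bc: "base_classifier Phi nu Bs lam a rho"
    and rest: "(if (\<exists>i<length Bs. a i < 1 / (nu * real (length Bs)) \<and> Bs!i \<noteq> [] \<and>
                (\<forall>x\<in>set (Bs!i). sgn1 (lfun Phi Bs lam a rho x) = -1))
         then refined_classifier Phi nu Bs lam (lfun Phi Bs lam a rho) l
         else l = lfun Phi Bs lam a rho)"
    using rc unfolding round_classifier_def by blast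
  have lm: "lam_feasible Bs lam" using bc by (simp add: base_classifier_def lam_min_def)
  show ?thesis
  proof (cases "\<exists>i<length Bs. a i < 1 / (nu * real (length Bs)) \<and> Bs!i \<noteq> [] \<and>
                (\<forall>x\<in>set (Bs!i). sgn1 (lfun Phi Bs lam a rho x) = -1)")
    case True
    hence "refined_classifier Phi nu Bs lam (lfun Phi Bs lam a rho) l" using rest by simp
    thus ?thesis using refined_key lm N nu by blast
  next
    case False
    hence "l = lfun Phi Bs lam a rho" using rest by simp
    thus ?thesis using base_key[OF bc N nu] by simp
  qed
qed


lemma sum_list_map_nth: "sum_list (map f xs) = (\<Sum>i<length xs. f (xs!i))"
  by (simp add: sum_list_sum_nth atLeast0LessThan)

lemma sgn1_eq1: "sgn1 y = 1 \<longleftrightarrow> 0 \<le> y"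
  by (simp add: sgn1_def)

definition inv_st :: "real \<Rightarrow> 'x list list \<Rightarrow> 'x pmi_state \<Rightarrow> bool" where
  "inv_st nu Bs st = (case st of
     Run Bs' q \<Rightarrow> length Bs' = length Bs \<and>
        (\<forall>i<length Bs. Bs'!i \<noteq> [] \<and> (nu < 1 / real (length Bs) \<longrightarrow> q + length (Bs'!i) \<le> length (Bs!i))) \<and>
        real q * ((1 - nu) * real (length Bs)) + real (sum_list (map length Bs'))
          \<le> real (sum_list (map length Bs))
   | Stop Q \<Rightarrow> real Q * ((1 - nu) * real (length Bs)) < real (sum_list (map length Bs)) \<and>
        (nu < 1 / real (length Bs) \<longrightarrow> (\<forall>i<length Bs. Q + 1 \<le> length (Bs!i))))"

lemma inv_step:
  fixes Phi :: "'x \<Rightarrow> 'h::real_inner"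
  assumes inv: "inv_st nu Bs st" and stp: "pmi_step Phi nu label st st'"
    and nu: "0 < nu" "nu < 1" and N0: "length Bs > 0"
  shows "inv_st nu Bs st'"
proof -
  obtain Bs' q l where st: "st = Run Bs' q" and rc: "round_classifier Phi nu Bs' l"
    and rest: "(if (\<exists>i<length Bs'. \<forall>x\<in>set (Bs'!i). sgn1 (l x) = 1)
         then st' = Stop q
         else (\<exists>i j. i < length Bs' \<and> j < length (Bs'!i) \<and> l (Bs'!i!j) \<ge> 0 \<and>
                 (\<forall>i' j'. i' < length Bs' \<longrightarrow> j' < length (Bs'!i') \<longrightarrow> l (Bs'!i'!j') \<ge> 0
                      \<longrightarrow> l (Bs'!i'!j') \<le> l (Bs'!i!j)) \<and>
                 (if label (Bs'!i!j) then st' = Stop (Suc q)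
                  else st' = Run (map (filter (\<lambda>x. sgn1 (l x) \<noteq> 1)) Bs') (Suc q))))"
    using stp unfolding pmi_step_def by blast
  define N where "N = length Bs"
  define k where "k = (1 - nu) * real N"
  define n where "n = sum_list (map length Bs)"
  define n' where "n' = (\<Sum>i<N. length (Bs'!i))"
  have len: "length Bs' = N" and ne: "\<forall>i<N. Bs'!i \<noteq> []"
    and pb: "nu < 1 / real N \<longrightarrow> (\<forall>i<N. q + length (Bs'!i) \<le> length (Bs!i))"
    and tot: "real q * k + real n' \<le> real n"
    using inv by (auto simp: inv_st_def st N_def k_def n_def n'_def sum_list_map_nth)
  have Npos: "N > 0" using N0 by (simp add: N_def)
  define P where "P = {i. i < N \<and> (\<exists>x\<in>set (Bs'!i). 0 \<le> l x)}"
  have kP: "k \<le> real (card P)"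
    using round_key[OF rc] len Npos nu by (simp add: P_def k_def)
  have n'1: "1 \<le> n'"
  proof -
    have "length (Bs'!0) \<le> n'" unfolding n'_def
      using Npos by (intro member_le_sum) auto
    moreover have "Bs'!0 \<noteq> []" using ne Npos by simp
    ultimately show ?thesis by (cases "Bs'!0") auto
  qed
  show ?thesis
  proof (cases "\<exists>i<length Bs'. \<forall>x\<in>set (Bs'!i). sgn1 (l x) = 1")
    case True
    hence st': "st' = Stop q" using rest by simp
    have "real q * k < real n" using tot n'1 by linarith
    moreover have "nu < 1 / real N \<longrightarrow> (\<forall>i<N. q + 1 \<le> length (Bs!i))"
    proof (intro impI allI)
      fix i assume "nu < 1 / real N" "i < N"
      moreover have "1 \<le> length (Bs'!i)" using ne \<open>i < N\<close> by (cases "Bs'!i") auto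
      ultimately show "q + 1 \<le> length (Bs!i)" using pb by fastforce
    qed
    ultimately show ?thesis by (simp add: inv_st_def st' N_def k_def n_def)
  next
    case False
    hence neg: "\<forall>i<N. \<exists>x\<in>set (Bs'!i). \<not> 0 \<le> l x" using len by (auto simp: sgn1_eq1)
    define F where "F = filter (\<lambda>x. sgn1 (l x) \<noteq> 1)"
    have Fne: "F (Bs'!i) \<noteq> []" if "i < N" for i
      using neg that by (auto simp: F_def filter_empty_conv sgn1_eq1)
    have Fle: "length (F (Bs'!i)) + (if i \<in> P then 1 else 0) \<le> length (Bs'!i)" if "i < N" for i
    proof (cases "i \<in> P")
      case True
      then obtain x where "x \<in> set (Bs'!i)" "0 \<le> l x" by (auto simp: P_def)
      hence "length (F (Bs'!i)) < length (Bs'!i)"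
        unfolding F_def by (intro length_filter_less) (auto simp: sgn1_eq1)
      thus ?thesis using True by simp
    next
      case False
      thus ?thesis by (simp add: F_def)
    qed
    define nF where "nF = (\<Sum>i<N. length (F (Bs'!i)))"
    have nF1: "real N \<le> real nF"
    proof -
      have "(\<Sum>i<N. (1::nat)) \<le> nF" unfolding nF_def
        using Fne by (intro sum_mono) (simp add: Suc_le_eq)
      thus ?thesis by simp
    qed
    have cardP: "card P = (\<Sum>i<N. (if i \<in> P then 1 else 0::nat))"
    proof -
      have "P \<subseteq> {..<N}" by (auto simp: P_def)
      hence "{..<N} \<inter> P = P" by auto
      thus ?thesis by (simp add: sum.If_cases)
    qed
    have "nF + card P \<le> n'"
    proof -
      have "nF + card P = (\<Sum>i<N. length (F (Bs'!i)) + (if i \<in> P then 1 else 0))"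
        by (simp add: nF_def cardP sum.distrib)
      also have "\<dots> \<le> n'" unfolding n'_def by (intro sum_mono Fle) simp
      finally show ?thesis .
    qed
    hence nFP: "real nF + real (card P) \<le> real n'" by linarith
    have allP: "\<forall>i<N. i \<in> P" if small: "nu < 1 / real N"
    proof -
      have "nu * real N < 1" using small Npos by (simp add: field_simps)
      hence "real N - 1 < real (card P)" using kP by (simp add: k_def algebra_simps)
      hence "N \<le> card P" by linarith
      moreover have sub: "P \<subseteq> {..<N}" by (auto simp: P_def)
      moreover have "card P \<le> N" using card_mono[OF _ sub] by simp
      ultimately have "card P = card {..<N}" by simp
      hence "P = {..<N}" using card_subset_eq[OF _ sub] by simp
      thus ?thesis by auto
    qed
    obtain i j where "i < length Bs'"
      and cases: "(if label (Bs'!i!j) then st' = Stop (Suc q)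
                  else st' = Run (map F Bs') (Suc q))"
      using rest False unfolding F_def by auto
    show ?thesis
    proof (cases "label (Bs'!i!j)")
      case True
      hence st': "st' = Stop (Suc q)" using cases by simp
      have "real (Suc q) * k < real n" using tot nFP nF1 kP Npos by (simp add: algebra_simps)
      moreover have "nu < 1 / real N \<longrightarrow> (\<forall>i<N. Suc q + 1 \<le> length (Bs!i))"
      proof (intro impI allI)
        fix i assume sm: "nu < 1 / real N" and i: "i < N"
        have "length (F (Bs'!i)) + 1 \<le> length (Bs'!i)" using Fle[OF i] allP[OF sm] i by simp
        moreover have "1 \<le> length (F (Bs'!i))" using Fne[OF i] by (cases "F (Bs'!i)") auto
        moreover have "q + length (Bs'!i) \<le> length (Bs!i)" using pb sm i by blast
        ultimately show "Suc q + 1 \<le> length (Bs!i)" by linarith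
      qed
      ultimately show ?thesis by (simp add: inv_st_def st' N_def k_def n_def)
    next
      case False
      hence st': "st' = Run (map F Bs') (Suc q)" using cases by simp
      have tot': "real (Suc q) * k + real nF \<le> real n" using tot nFP kP by (simp add: algebra_simps)
      have pb': "nu < 1 / real N \<longrightarrow> (\<forall>i<N. Suc q + length (F (Bs'!i)) \<le> length (Bs!i))"
      proof (intro impI allI)
        fix i assume sm: "nu < 1 / real N" and i: "i < N"
        have "length (F (Bs'!i)) + 1 \<le> length (Bs'!i)" using Fle[OF i] allP[OF sm] i by simp
        moreover have "q + length (Bs'!i) \<le> length (Bs!i)" using pb sm i by blast
        ultimately show "Suc q + length (F (Bs'!i)) \<le> length (Bs!i)" by linarith
      qed
      have "sum_list (map length (map F Bs')) = nF"
        by (simp add: sum_list_map_nth nF_def len)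
      thus ?thesis using tot' pb' Fne len
        by (simp add: inv_st_def st' N_def k_def n_def)
    qed
  qed
qed


theorem theorem3:
  fixes Bs :: "(real ^ 'd) list list"
    and Phi :: "real ^ 'd \<Rightarrow> 'h::real_inner"
    and nu :: real
    and label :: "real ^ 'd \<Rightarrow> bool"
    and st :: "(real ^ 'd) pmi_state"
  assumes "0 < nu" and "nu < 1"
    and "Bs \<noteq> []" and "\<forall>B\<in>set Bs. B \<noteq> []"
    and "(pmi_step Phi nu label)\<^sup>*\<^sup>* (Run Bs 0) st"
  shows "if nu < 1 / real (length Bs)
         then queries st \<le> Min (length ` set Bs) - 1
         else real (queries st)
                \<le> of_int \<lceil>real (sum_list (map length Bs)) / ((1 - nu) * real (length Bs))\<rceil> - 1"
proof -
  define N where "N = length Bs"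
  define n where "n = sum_list (map length Bs)"
  have N0: "length Bs > 0" using assms(3) by simp
  have inv: "inv_st nu Bs st"
    using assms(5)
  proof (induction rule: rtranclp_induct)
    case base
    have "\<forall>i<length Bs. Bs!i \<noteq> []" using assms(4) by (simp add: nth_mem)
    thus ?case by (simp add: inv_st_def)
  next
    case (step y z)
    thus ?case using inv_step assms(1,2) N0 by blast
  qed
  have Q: "real (queries st) * ((1 - nu) * real N) < real n \<and>
        (nu < 1 / real N \<longrightarrow> (\<forall>i<N. queries st + 1 \<le> length (Bs!i)))"
  proof (cases st)
    case (Run Bs' q)
    have len: "length Bs' = N" and ne: "\<forall>i<N. Bs'!i \<noteq> []"
      and pb: "nu < 1 / real N \<longrightarrow> (\<forall>i<N. q + length (Bs'!i) \<le> length (Bs!i))"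
      and tot: "real q * ((1 - nu) * real N) + real (sum_list (map length Bs')) \<le> real n"
      using inv by (auto simp: inv_st_def Run N_def n_def)
    have "length (Bs'!0) \<le> sum_list (map length Bs')"
      unfolding sum_list_map_nth using N0 len by (intro member_le_sum) (auto simp: N_def)
    moreover have "1 \<le> length (Bs'!0)" using ne N0 by (cases "Bs'!0") (auto simp: N_def)
    ultimately have "real q * ((1 - nu) * real N) < real n" using tot by linarith
    moreover have "nu < 1 / real N \<longrightarrow> (\<forall>i<N. q + 1 \<le> length (Bs!i))"
    proof (intro impI allI)
      fix i assume sm: "nu < 1 / real N" and i: "i < N"
      have "1 \<le> length (Bs'!i)" using ne i by (cases "Bs'!i") auto
      thus "q + 1 \<le> length (Bs!i)" using pb sm i by fastforce
    qed
    ultimately show ?thesis by (simp add: Run)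
  next
    case (Stop Q)
    thus ?thesis using inv by (simp add: inv_st_def N_def n_def)
  qed
  show ?thesis
  proof (cases "nu < 1 / real (length Bs)")
    case True
    have all: "\<forall>i<N. queries st + 1 \<le> length (Bs!i)" using Q True by (simp add: N_def)
    have "queries st + 1 \<le> Min (length ` set Bs)"
    proof (subst Min_ge_iff)
      show "finite (length ` set Bs)" by simp
      show "length ` set Bs \<noteq> {}" using assms(3) by simp
      show "\<forall>a\<in>length ` set Bs. queries st + 1 \<le> a"
        using all by (auto simp: in_set_conv_nth N_def)
    qed
    thus ?thesis using True by simp
  next
    case False
    have kpos: "(1 - nu) * real N > 0" using assms(2) N0 by (simp add: N_def)
    have "real (queries st) < real n / ((1 - nu) * real N)"
      using Q kpos by (simp add: field_simps)
    hence "int (queries st) < \<lceil>real n / ((1 - nu) * real N)\<rceil>"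
      by (simp add: less_ceiling_iff)
    hence "int (queries st) \<le> \<lceil>real n / ((1 - nu) * real N)\<rceil> - 1" by linarith
    hence "real (queries st) \<le> of_int (\<lceil>real n / ((1 - nu) * real N)\<rceil> - 1)"
      by (metis of_int_le_iff of_int_of_nat_eq)
    thus ?thesis using False by (simp add: N_def n_def)
  qed
qed

end
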